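(* Let $\mathcal{AP}=\langle \Pi, E, \mathit{Hyp}, \mathit{Obs}\rangle$ be a Datalog abduction problem with $E\cap\mathit{Hyp}=\emptyset$. Define the instance $D=D^x\cup D^n$ with exogenous tuples $D^x:=E$ and endogenous tuples $D^n:=\mathit{Hyp}$, and the boolean Datalog query $\Pi':=\Pi\cup\{\mathit{ans}\leftarrow \mathit{Obs}\}$, where $\mathit{ans}$ is a fresh propositional atom. Then a hypothesis $h$ is relevant for $\mathcal{AP}$ (i.e. $h\in\mathit{Rel}(\mathcal{AP})$) if and only if $h$ is an actual cause for $\mathit{ans}$ with respect to $\Pi'$ and $D$.
   Context: A Datalog abduction problem $\langle\Pi,E,\mathit{Hyp},\mathit{Obs}\rangle$ consists of a finite set $\Pi$ of positive Datalog rules, a finite set $E$ of ground atoms whose predicates do not occur in rule heads, a finite set $\mathit{Hyp}$ of ground atoms (hypotheses) whose predicates do not occur in rule heads, and a finite conjunction $\mathit{Obs}$ of ground atoms, with $\Pi\cup E\cup\mathit{Hyp}\models\mathit{Obs}$ ($\models$ meaning membership in the minimal model). An abductive diagnosis is a subset-minimal $\Delta\subseteq\mathit{Hyp}$ with $\Pi\cup E\cup\Delta\models\mathit{Obs}$; $\mathit{Rel}(\mathcal{AP})$ is the set of hypotheses in some abductive diagnosis. A tuple $\tau\in D^n$ is an actual cause for $\mathit{ans}$ w.r.t. $\Pi'$ and $D$ if there is $\Gamma\subseteq D^n$ with $\Pi'\cup(D\smallsetminus\Gamma)\models\mathit{ans}$ and $\Pi'\cup(D\smallsetminus(\Gamma\cup\{\tau\}))\not\models\mathit{ans}$.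 *)

theory Defs
  imports Main
begin

datatype ('v, 'c) dterm = Var 'v | Const 'c

datatype ('p, 'v, 'c) atom = Atom 'p "('v, 'c) dterm list"
datatype ('p, 'c) gatom = GAtom 'p "'c list"

datatype ('p, 'v, 'c) rule = Rule "('p, 'v, 'c) atom" "('p, 'v, 'c) atom list"

fun apred :: "('p, 'v, 'c) atom \<Rightarrow> 'p" where
  "apred (Atom p ts) = p"

fun gpred :: "('p, 'c) gatom \<Rightarrow> 'p" where
  "gpred (GAtom p cs) = p"

fun head :: "('p, 'v, 'c) rule \<Rightarrow> ('p, 'v, 'c) atom" where
  "head (Rule h b) = h"

fun body :: "('p, 'v, 'c) rule \<Rightarrow> ('p, 'v, 'c) atom list" where
  "body (Rule h b) = b"

fun tvars :: "('v, 'c) dterm \<Rightarrow> 'v set" where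
  "tvars (Var v) = {v}"
| "tvars (Const c) = {}"

fun avars :: "('p, 'v, 'c) atom \<Rightarrow> 'v set" where
  "avars (Atom p ts) = (\<Union>t\<in>set ts. tvars t)"

definition safe_rule :: "('p, 'v, 'c) rule \<Rightarrow> bool" where
  "safe_rule r \<longleftrightarrow> avars (head r) \<subseteq> (\<Union>a\<in>set (body r). avars a)"

definition rule_preds :: "('p, 'v, 'c) rule \<Rightarrow> 'p set" where
  "rule_preds r = insert (apred (head r)) (apred ` set (body r))"

definition head_preds :: "('p, 'v, 'c) rule set \<Rightarrow> 'p set" where
  "head_preds \<Pi> = (apred \<circ> head) ` \<Pi>"

fun tinst :: "('v \<Rightarrow> 'c) \<Rightarrow> ('v, 'c) dterm \<Rightarrow> 'c" where
  "tinst \<sigma> (Var v) = \<sigma> v"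
| "tinst \<sigma> (Const c) = c"

fun ainst :: "('v \<Rightarrow> 'c) \<Rightarrow> ('p, 'v, 'c) atom \<Rightarrow> ('p, 'c) gatom" where
  "ainst \<sigma> (Atom p ts) = GAtom p (map (tinst \<sigma>) ts)"

fun of_gatom :: "('p, 'c) gatom \<Rightarrow> ('p, 'v, 'c) atom" where
  "of_gatom (GAtom p cs) = Atom p (map Const cs)"

inductive_set minmodel :: "('p, 'v, 'c) rule set \<Rightarrow> ('p, 'c) gatom set \<Rightarrow> ('p, 'c) gatom set"
  for \<Pi> F where
  fact: "a \<in> F \<Longrightarrow> a \<in> minmodel \<Pi> F"
| rule: "\<lbrakk> r \<in> \<Pi>; \<forall>b\<in>set (body r). ainst \<sigma> b \<in> minmodel \<Pi> F \<rbrakk>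
          \<Longrightarrow> ainst \<sigma> (head r) \<in> minmodel \<Pi> F"

definition entails :: "('p, 'v, 'c) rule set \<Rightarrow> ('p, 'c) gatom set \<Rightarrow> ('p, 'c) gatom \<Rightarrow> bool" where
  "entails \<Pi> F a \<longleftrightarrow> a \<in> minmodel \<Pi> F"

definition entails_all :: "('p, 'v, 'c) rule set \<Rightarrow> ('p, 'c) gatom set \<Rightarrow> ('p, 'c) gatom list \<Rightarrow> bool" where
  "entails_all \<Pi> F obs \<longleftrightarrow> (\<forall>a\<in>set obs. entails \<Pi> F a)"

definition abduction_problem ::
  "('p, 'v, 'c) rule set \<Rightarrow> ('p, 'c) gatom set \<Rightarrow> ('p, 'c) gatom set \<Rightarrow> ('p, 'c) gatom list \<Rightarrow> bool" where
  "abduction_problem \<Pi> E Hyp Obs \<longleftrightarrow>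
     finite \<Pi> \<and> (\<forall>r\<in>\<Pi>. safe_rule r) \<and> finite E \<and> finite Hyp \<and>
     gpred ` E \<inter> head_preds \<Pi> = {} \<and> gpred ` Hyp \<inter> head_preds \<Pi> = {} \<and>
     entails_all \<Pi> (E \<union> Hyp) Obs"

definition abductive_diagnosis ::
  "('p, 'v, 'c) rule set \<Rightarrow> ('p, 'c) gatom set \<Rightarrow> ('p, 'c) gatom set \<Rightarrow> ('p, 'c) gatom list
   \<Rightarrow> ('p, 'c) gatom set \<Rightarrow> bool" where
  "abductive_diagnosis \<Pi> E Hyp Obs \<Delta> \<longleftrightarrow>
     \<Delta> \<subseteq> Hyp \<and> entails_all \<Pi> (E \<union> \<Delta>) Obs \<and>
     (\<forall>\<Delta>'. \<Delta>' \<subset> \<Delta> \<longrightarrow> \<not> entails_all \<Pi> (E \<union> \<Delta>') Obs)"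

definition Rel ::
  "('p, 'v, 'c) rule set \<Rightarrow> ('p, 'c) gatom set \<Rightarrow> ('p, 'c) gatom set \<Rightarrow> ('p, 'c) gatom list
   \<Rightarrow> ('p, 'c) gatom set" where
  "Rel \<Pi> E Hyp Obs = {h. \<exists>\<Delta>. abductive_diagnosis \<Pi> E Hyp Obs \<Delta> \<and> h \<in> \<Delta>}"

definition actual_cause ::
  "('p, 'v, 'c) rule set \<Rightarrow> ('p, 'c) gatom set \<Rightarrow> ('p, 'c) gatom set \<Rightarrow> ('p, 'c) gatom
   \<Rightarrow> ('p, 'c) gatom \<Rightarrow> bool" where
  "actual_cause \<Pi>' Dx Dn ans \<tau> \<longleftrightarrow>
     \<tau> \<in> Dn \<and>
     (\<exists>\<Gamma>. \<Gamma> \<subseteq> Dn \<and> entails \<Pi>' ((Dx \<union> Dn) - \<Gamma>) ans \<and>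
           \<not> entails \<Pi>' ((Dx \<union> Dn) - (\<Gamma> \<union> {\<tau>})) ans)"

definition ans_rule :: "'p \<Rightarrow> ('p, 'c) gatom list \<Rightarrow> ('p, 'v, 'c) rule" where
  "ans_rule ansp Obs = Rule (Atom ansp []) (map of_gatom Obs)"

end

theory Submission
  imports Defs
begin

lemma minmodel_mono_F:
  assumes "a \<in> minmodel P F" "F \<subseteq> G" shows "a \<in> minmodel P G"
  using assms(1)
proof (induction rule: minmodel.induct)
  case (fact a) then show ?case using assms(2) by (auto intro: minmodel.fact)
next
  case (rule r \<sigma>) then show ?case by (auto intro: minmodel.rule)
qed

lemma minmodel_mono_P:
  assumes "a \<in> minmodel P F" "P \<subseteq> Q" shows "a \<in> minmodel Q F"
  using assms(1)
proof (induction rule: minmodel.induct)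
  case (fact a) then show ?case by (auto intro: minmodel.fact)
next
  case (rule r \<sigma>) then show ?case using assms(2) by (auto intro: minmodel.rule)
qed

lemma ainst_of_gatom: "ainst \<sigma> (of_gatom g) = g"
  by (cases g) (simp add: comp_def)

lemma ans_back:
  assumes "a \<in> minmodel (insert (ans_rule ansp Obs) P) F"
    and fr: "\<forall>r\<in>P. ansp \<notin> rule_preds r"
    and fF: "ansp \<notin> gpred ` F"
    and fO: "ansp \<notin> gpred ` set Obs"
  shows "(a \<in> minmodel P F \<and> gpred a \<noteq> ansp) \<or>
         (a = GAtom ansp [] \<and> entails_all P F Obs)"
  using assms(1)
proof (induction rule: minmodel.induct)
  case (fact a) then show ?case using fF by (auto intro: minmodel.fact)
next
  case (rule r \<sigma>)
  show ?case
  proof (cases "r = ans_rule ansp Obs")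
    case True
    have "\<forall>g\<in>set Obs. g \<in> minmodel P F"
    proof
      fix g assume g: "g \<in> set Obs"
      then have "of_gatom g \<in> set (body r)" using True by (simp add: ans_rule_def)
      then have "(ainst \<sigma> (of_gatom g) \<in> minmodel P F \<and> gpred (ainst \<sigma> (of_gatom g)) \<noteq> ansp) \<or>
         (ainst \<sigma> (of_gatom g) = GAtom ansp [] \<and> entails_all P F Obs)" using rule by blast
      then show "g \<in> minmodel P F" using g fO by (auto simp: ainst_of_gatom) (metis gpred.simps image_eqI)
    qed
    then show ?thesis using True by (simp add: ans_rule_def entails_all_def entails_def)
  next
    case False
    then have rP: "r \<in> P" using rule by auto
    then have rp: "ansp \<notin> rule_preds r" using fr by auto
    have "\<forall>b\<in>set (body r). ainst \<sigma> b \<in> minmodel P F"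
    proof
      fix b assume b: "b \<in> set (body r)"
      then have "apred b \<noteq> ansp" using rp by (auto simp: rule_preds_def)
      moreover have "gpred (ainst \<sigma> b) = apred b" by (cases b) auto
      ultimately show "ainst \<sigma> b \<in> minmodel P F" using rule b by fastforce
    qed
    then have "ainst \<sigma> (head r) \<in> minmodel P F" using rP by (metis minmodel.rule)
    moreover have "gpred (ainst \<sigma> (head r)) = apred (head r)" by (cases "head r") auto
    moreover have "apred (head r) \<noteq> ansp" using rp by (auto simp: rule_preds_def)
    ultimately show ?thesis by auto
  qed
qed

lemma ans_iff:
  fixes P :: "('p,'v,'c) rule set"
  assumes fr: "\<forall>r\<in>P. ansp \<notin> rule_preds r"
    and fF: "ansp \<notin> gpred ` F"
    and fO: "ansp \<notin> gpred ` set Obs"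
  shows "entails (insert (ans_rule ansp Obs) P) F (GAtom ansp []) \<longleftrightarrow> entails_all P F Obs"
proof
  assume "entails (insert (ans_rule ansp Obs) P) F (GAtom ansp [])"
  then show "entails_all P F Obs" using ans_back[OF _ fr fF fO] unfolding entails_def by fastforce
next
  assume A: "entails_all P F Obs"
  have "\<forall>b\<in>set (body (ans_rule ansp Obs :: ('p,'v,'c) rule)). ainst (\<lambda>_. undefined) b \<in> minmodel (insert (ans_rule ansp Obs) P) F"
    using A by (auto simp: ans_rule_def ainst_of_gatom entails_all_def entails_def
        intro: minmodel_mono_P)
  then have "ainst (\<lambda>_. undefined) (head (ans_rule ansp Obs :: ('p,'v,'c) rule)) \<in> minmodel (insert (ans_rule ansp Obs) P) F"
    using minmodel.rule[OF insertI1] by blast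
  then show "entails (insert (ans_rule ansp Obs) P) F (GAtom ansp [])"
    by (simp add: ans_rule_def entails_def)
qed

lemma ent_mono:
  "entails_all P (E \<union> A) Obs \<Longrightarrow> A \<subseteq> B \<Longrightarrow> entails_all P (E \<union> B) Obs"
  unfolding entails_all_def entails_def by (meson minmodel_mono_F sup.mono order_refl)

lemma exists_minimal:
  assumes "finite S" "Q S"
  shows "\<exists>D\<subseteq>S. Q D \<and> (\<forall>D'. D' \<subset> D \<longrightarrow> \<not> Q D')"
  using assms
proof (induction S rule: finite_psubset_induct)
  case (psubset A)
  show ?case
  proof (cases "\<exists>D'. D' \<subset> A \<and> Q D'")
    case True
    then obtain D' where "D' \<subset> A" "Q D'" by blast
    with psubset.IH[of D'] show ?thesis by (meson order.trans psubset_imp_subset)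
  next
    case False then show ?thesis using psubset by blast
  qed
qed

theorem proposition4:
  fixes \<Pi> :: "('p, 'v, 'c) rule set"
    and E Hyp :: "('p, 'c) gatom set"
    and Obs :: "('p, 'c) gatom list"
    and ansp :: 'p
    and h :: "('p, 'c) gatom"
  assumes AP: "abduction_problem \<Pi> E Hyp Obs"
    and disj: "E \<inter> Hyp = {}"
    and fresh_rules: "\<forall>r\<in>\<Pi>. ansp \<notin> rule_preds r"
    and fresh_E: "ansp \<notin> gpred ` E"
    and fresh_Hyp: "ansp \<notin> gpred ` Hyp"
    and fresh_Obs: "ansp \<notin> gpred ` set Obs"
    and hyp: "h \<in> Hyp"
  shows "h \<in> Rel \<Pi> E Hyp Obs \<longleftrightarrow>
         actual_cause (insert (ans_rule ansp Obs) \<Pi>) E Hyp (GAtom ansp []) h"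
proof -
  have finH: "finite Hyp" using AP by (simp add: abduction_problem_def)
  have key: "\<And>G. G \<subseteq> E \<union> Hyp \<Longrightarrow>
     entails (insert (ans_rule ansp Obs) \<Pi>) G (GAtom ansp []) \<longleftrightarrow> entails_all \<Pi> G Obs"
    by (rule ans_iff[OF fresh_rules _ fresh_Obs]) (use fresh_E fresh_Hyp in blast)
  have eq1: "\<And>\<Gamma>. \<Gamma> \<subseteq> Hyp \<Longrightarrow> (E \<union> Hyp) - \<Gamma> = E \<union> (Hyp - \<Gamma>)" using disj by blast
  have eq2: "\<And>\<Gamma>. \<Gamma> \<subseteq> Hyp \<Longrightarrow> (E \<union> Hyp) - (\<Gamma> \<union> {h}) = E \<union> (Hyp - \<Gamma> - {h})" using disj hyp by blast
  have AC: "actual_cause (insert (ans_rule ansp Obs) \<Pi>) E Hyp (GAtom ansp []) h \<longleftrightarrow>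
    (\<exists>\<Gamma>\<subseteq>Hyp. entails_all \<Pi> (E \<union> (Hyp - \<Gamma>)) Obs \<and> \<not> entails_all \<Pi> (E \<union> (Hyp - \<Gamma> - {h})) Obs)"
  proof -
    have "\<And>\<Gamma>. \<Gamma> \<subseteq> Hyp \<Longrightarrow> entails (insert (ans_rule ansp Obs) \<Pi>) ((E \<union> Hyp) - \<Gamma>) (GAtom ansp [])
       \<longleftrightarrow> entails_all \<Pi> (E \<union> (Hyp - \<Gamma>)) Obs"
      by (simp only: eq1) (rule key; blast)
    moreover have "\<And>\<Gamma>. \<Gamma> \<subseteq> Hyp \<Longrightarrow> entails (insert (ans_rule ansp Obs) \<Pi>) ((E \<union> Hyp) - (\<Gamma> \<union> {h})) (GAtom ansp [])
       \<longleftrightarrow> entails_all \<Pi> (E \<union> (Hyp - \<Gamma> - {h})) Obs"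
      by (simp only: eq2) (rule key; blast)
    ultimately show ?thesis unfolding actual_cause_def using hyp by blast
  qed
  show ?thesis
  proof
    assume "h \<in> Rel \<Pi> E Hyp Obs"
    then obtain \<Delta> where D: "abductive_diagnosis \<Pi> E Hyp Obs \<Delta>" "h \<in> \<Delta>" by (auto simp: Rel_def)
    then have "\<Delta> \<subseteq> Hyp" "entails_all \<Pi> (E \<union> \<Delta>) Obs" "\<not> entails_all \<Pi> (E \<union> (\<Delta> - {h})) Obs"
      by (auto simp: abductive_diagnosis_def)
    moreover have "Hyp - (Hyp - \<Delta>) = \<Delta>" using \<open>\<Delta> \<subseteq> Hyp\<close> by blast
    ultimately show "actual_cause (insert (ans_rule ansp Obs) \<Pi>) E Hyp (GAtom ansp []) h"
      unfolding AC by (intro exI[of _ "Hyp - \<Delta>"]) auto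
  next
    assume "actual_cause (insert (ans_rule ansp Obs) \<Pi>) E Hyp (GAtom ansp []) h"
    then obtain \<Gamma> where G: "\<Gamma> \<subseteq> Hyp" "entails_all \<Pi> (E \<union> (Hyp - \<Gamma>)) Obs"
      "\<not> entails_all \<Pi> (E \<union> (Hyp - \<Gamma> - {h})) Obs" unfolding AC by blast
    define S where "S = Hyp - \<Gamma>"
    have "finite S" using finH by (simp add: S_def)
    then obtain \<Delta> where D: "\<Delta> \<subseteq> S" "entails_all \<Pi> (E \<union> \<Delta>) Obs"
      "\<forall>D'. D' \<subset> \<Delta> \<longrightarrow> \<not> entails_all \<Pi> (E \<union> D') Obs"
      using exists_minimal[of S "\<lambda>D. entails_all \<Pi> (E \<union> D) Obs"] G(2) S_def by blast
    have "h \<in> \<Delta>"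
    proof (rule ccontr)
      assume "h \<notin> \<Delta>"
      then have "\<Delta> \<subseteq> Hyp - \<Gamma> - {h}" using D(1) S_def by blast
      then show False using ent_mono[OF D(2)] G(3) by blast
    qed
    moreover have "abductive_diagnosis \<Pi> E Hyp Obs \<Delta>"
      using D S_def by (auto simp: abductive_diagnosis_def)
    ultimately show "h \<in> Rel \<Pi> E Hyp Obs" by (auto simp: Rel_def)
  qed
qed

end
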